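(* The following three subalgebras of the $q$-shuffle algebra $(\mathbb V,\star)$ coincide: (i) the subalgebra generated by $\{C_n\}_{n=1}^\infty$; (ii) the subalgebra generated by $\{xC_ny\}_{n=0}^\infty$ (free products $xC_ny$); (iii) the subalgebra generated by $\{\tilde G_n\}_{n=1}^\infty$, where $\tilde G_n=xyxy\cdots xy$ is the word consisting of $n$ consecutive copies of $xy$.
   Context: $\mathbb F$ is a field of characteristic zero and $q\in\mathbb F$ is nonzero and not a root of unity; $[n]_q=(q^n-q^{-n})/(q-q^{-1})$. $\mathbb V$ is the free algebra on noncommuting letters $x,y$; a word is a product of letters (the empty word is $1$), and words form a basis. The $q$-shuffle product $\star$ on $\mathbb V$ is the bilinear product with $1\star v=v\star 1=v$ and, for nontrivial words $u=u_1\cdots u_r$, $v=v_1\cdots v_s$ (letters $u_i,v_j$), $u\star v=u_1\bigl((u_2\cdots u_r)\star v\bigr)+v_1\bigl(u\star(v_2\cdots v_s)\bigr)q^{(u_1,v_1)+(u_2,v_1)+\cdots+(u_r,v_1)}$, where juxtaposition is concatenation and $(x,x)=(y,y)=2$, $(x,y)=(y,x)=-2$. Subalgebras contain the identity $1$. Set $\overline x=1$, $\overline y=-1$. A word $u_1\cdots u_n$ is Catalan if $\overline u_1+\cdots+\overline u_i\ge0$ for $1\le i\le n-1$ and $=0$ for $i=n$. For $n\in\mathbb N$, $C_n=\sum u_1u_2\cdots u_{2n}\,[1]_q[1+\overline u_1]_q[1+\overline u_1+\overline u_2]_q\cdots[1+\overline u_1+\cdots+\overline u_{2n}]_q$, summed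 over all Catalan words of length $2n$ (so $C_0=1$). *)

theory Defs
  imports Main
begin

text \<open>Words are lists of letters; an element of V is represented by its coefficient
  function on words (only finitely supported ones arise below).\<close>

datatype letter = X | Y

type_synonym 'f vec = "letter list \<Rightarrow> 'f"

definition ip :: "letter \<Rightarrow> letter \<Rightarrow> int" where
  "ip a b = (if a = b then 2 else -2)"

definition lcons :: "letter \<Rightarrow> 'f::zero vec \<Rightarrow> 'f vec" where
  "lcons a f = (\<lambda>w. case w of [] \<Rightarrow> 0 | c # w' \<Rightarrow> (if c = a then f w' else 0))"

definition rsnoc :: "'f::zero vec \<Rightarrow> letter \<Rightarrow> 'f vec" where
  "rsnoc f b = (\<lambda>w. if w \<noteq> [] \<and> last w = b then f (butlast w) else 0)"

definition single_word :: "letter list \<Rightarrow> 'f::{zero,one} vec" where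
  "single_word u = (\<lambda>w. if w = u then 1 else 0)"

function qsh :: "'f::field \<Rightarrow> letter list \<Rightarrow> letter list \<Rightarrow> 'f vec" where
  "qsh q [] v = single_word v"
| "qsh q (a # u) [] = single_word (a # u)"
| "qsh q (a # u) (b # v) =
     (\<lambda>w. lcons a (qsh q u (b # v)) w
          + q powi (\<Sum>c\<leftarrow>a # u. ip c b) * lcons b (qsh q (a # u) v) w)"
  by pat_completeness auto
termination by (relation "measure (\<lambda>(q, u, v). length u + length v)") auto

definition supp :: "'f::zero vec \<Rightarrow> letter list set" where
  "supp f = {u. f u \<noteq> 0}"

definition qstar :: "'f::field \<Rightarrow> 'f vec \<Rightarrow> 'f vec \<Rightarrow> 'f vec" where
  "qstar q f g = (\<lambda>w. \<Sum>u\<in>supp f. \<Sum>v\<in>supp g. f u * g v * qsh q u v w)"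

inductive_set gen_subalg :: "'f::field \<Rightarrow> 'f vec set \<Rightarrow> 'f vec set"
  for q :: 'f and S :: "'f vec set" where
  one: "single_word [] \<in> gen_subalg q S"
| base: "s \<in> S \<Longrightarrow> s \<in> gen_subalg q S"
| add: "a \<in> gen_subalg q S \<Longrightarrow> b \<in> gen_subalg q S \<Longrightarrow> (\<lambda>w. a w + b w) \<in> gen_subalg q S"
| smult: "a \<in> gen_subalg q S \<Longrightarrow> (\<lambda>w. c * a w) \<in> gen_subalg q S"
| star: "a \<in> gen_subalg q S \<Longrightarrow> b \<in> gen_subalg q S \<Longrightarrow> qstar q a b \<in> gen_subalg q S"

definition qint :: "'f::field \<Rightarrow> int \<Rightarrow> 'f" where
  "qint q n = (q powi n - q powi (- n)) / (q - inverse q)"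

definition lbar :: "letter \<Rightarrow> int" where
  "lbar a = (if a = X then 1 else -1)"

definition psum :: "letter list \<Rightarrow> nat \<Rightarrow> int" where
  "psum w i = (\<Sum>a\<leftarrow>take i w. lbar a)"

definition catalan :: "letter list \<Rightarrow> bool" where
  "catalan w \<longleftrightarrow> (\<forall>i\<in>{1..length w - 1}. psum w i \<ge> 0) \<and> psum w (length w) = 0"

definition Cat :: "'f::field \<Rightarrow> nat \<Rightarrow> 'f vec" where
  "Cat q n = (\<lambda>w. if catalan w \<and> length w = 2 * n
                  then (\<Prod>i = 0..2 * n. qint q (1 + psum w i)) else 0)"

definition Gt :: "nat \<Rightarrow> 'f::{zero,one} vec" where
  "Gt n = single_word (concat (replicate n [X, Y]))"

end

theory Submission
  imports Defs
begin

lemma UNIV_letter: "(UNIV :: letter set) = {X, Y}"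
  using letter.exhaust by auto

lemma finite_len_le: "finite {u :: letter list. length u \<le> n}"
proof -
  have "finite {xs. set xs \<subseteq> (UNIV::letter set) \<and> length xs \<le> n}"
    by (rule finite_lists_length_le) (simp add: UNIV_letter)
  then show ?thesis by simp
qed

lemma single_word_nz: "single_word v w \<noteq> 0 \<Longrightarrow> w = v"
  by (auto simp: single_word_def split: if_splits)

lemma qsh_Nil2[simp]: "qsh q u [] = single_word u"
  by (cases u) auto

lemma qsh_len: "qsh q u v w \<noteq> 0 \<Longrightarrow> length w = length u + length v"
proof (induction q u v arbitrary: w rule: qsh.induct)
  case (1 q v)
  then show ?case by (auto dest: single_word_nz)
next
  case (2 q a u)
  then show ?case by (auto dest: single_word_nz)
next
  case (3 q a u b v)
  from "3.prems" obtain c w' where w: "w = c # w'"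
    by (cases w) (auto simp: lcons_def)
  show ?case
  proof (cases "qsh q u (b # v) w' \<noteq> 0 \<and> c = a")
    case True
    then show ?thesis using "3.IH"(1)[of w'] w by simp
  next
    case False
    then have "lcons a (qsh q u (b # v)) w = 0" using w by (auto simp: lcons_def)
    with "3.prems" have "lcons b (qsh q (a # u) v) w \<noteq> 0" by auto
    then have "qsh q (a # u) v w' \<noteq> 0" using w by (auto simp: lcons_def split: if_splits)
    then show ?thesis using "3.IH"(2)[of w'] w by simp
  qed
qed

lemma qsh_nil_w: "qsh q u v [] = (if u = [] \<and> v = [] then 1 else 0)"
  by (cases u; cases v) (auto simp: single_word_def lcons_def)

lemma qsh_cons_w: "qsh q u v (c # w) =
   (case u of [] \<Rightarrow> 0 | a # u' \<Rightarrow> if a = c then qsh q u' v w else 0) +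
   (case v of [] \<Rightarrow> 0 | b # v' \<Rightarrow> if b = c then q powi (\<Sum>x\<leftarrow>u. ip x b) * qsh q u v' w else 0)"
  by (cases u; cases v) (auto simp: single_word_def lcons_def)

definition dv :: "letter \<Rightarrow> 'f vec \<Rightarrow> 'f vec" where
  "dv c f = (\<lambda>w. f (c # w))"

definition tw :: "'f::field \<Rightarrow> letter \<Rightarrow> 'f vec \<Rightarrow> 'f vec" where
  "tw q c f = (\<lambda>u. q powi (\<Sum>x\<leftarrow>u. ip x c) * f u)"

fun sh :: "'f::field \<Rightarrow> 'f vec \<Rightarrow> 'f vec \<Rightarrow> letter list \<Rightarrow> 'f" where
  "sh q A B [] = A [] * B []"
| "sh q A B (c # w) = sh q (dv c A) B w + sh q (tw q c A) (dv c B) w"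

lemma sum_cons_reindex:
  assumes "finite U"
  shows "(\<Sum>u\<in>U. case u of [] \<Rightarrow> 0 | a # u' \<Rightarrow> if a = c then f u' else (0::'f::comm_monoid_add))
         = (\<Sum>u'\<in>Cons c -` U. f u')"
proof -
  have "(\<Sum>u\<in>U. case u of [] \<Rightarrow> 0 | a # u' \<Rightarrow> if a = c then f u' else 0)
      = (\<Sum>u\<in>Cons c ` (Cons c -` U). case u of [] \<Rightarrow> 0 | a # u' \<Rightarrow> if a = c then f u' else 0)"
    by (rule sum.mono_neutral_right) (auto simp: assms split: list.splits)
  also have "\<dots> = (\<Sum>u'\<in>Cons c -` U. f u')"
    by (subst sum.reindex) (auto simp: inj_on_def)
  finally show ?thesis .
qed

lemma sh_sum:
  assumes "finite U" "finite V"
    "\<And>u. A u \<noteq> 0 \<Longrightarrow> length u \<le> length w \<Longrightarrow> u \<in> U"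
    "\<And>v. B v \<noteq> 0 \<Longrightarrow> length v \<le> length w \<Longrightarrow> v \<in> V"
  shows "sh q A B w = (\<Sum>u\<in>U. \<Sum>v\<in>V. A u * B v * qsh q u v w)"
  using assms
proof (induction w arbitrary: A B U V)
  case Nil
  have "(\<Sum>u\<in>U. \<Sum>v\<in>V. A u * B v * qsh q u v []) =
        (\<Sum>u\<in>U. if u = [] then (\<Sum>v\<in>V. if v = [] then A u * B v else 0) else 0)"
    by (rule sum.cong) (auto simp: qsh_nil_w intro!: sum.cong)
  also have "\<dots> = (if [] \<in> U then (if [] \<in> V then A [] * B [] else 0) else 0)"
    using Nil.prems(1,2) by (simp add: sum.delta)
  also have "\<dots> = A [] * B []" using Nil.prems(3,4) by auto
  finally show ?case by simp
next
  case (Cons c w)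
  let ?U' = "Cons c -` U" and ?V' = "Cons c -` V"
  have fU': "finite ?U'" using Cons.prems(1) by (simp add: finite_vimageI inj_on_def)
  have fV': "finite ?V'" using Cons.prems(2) by (simp add: finite_vimageI inj_on_def)
  have IH1: "sh q (dv c A) B w = (\<Sum>u\<in>?U'. \<Sum>v\<in>V. dv c A u * B v * qsh q u v w)"
    by (rule Cons.IH) (use Cons.prems in \<open>auto simp: dv_def fU'\<close>)
  have IH2: "sh q (tw q c A) (dv c B) w = (\<Sum>u\<in>U. \<Sum>v\<in>?V'. tw q c A u * dv c B v * qsh q u v w)"
    by (rule Cons.IH) (use Cons.prems in \<open>auto simp: dv_def tw_def fV'\<close>)
  have S1: "(\<Sum>u\<in>U. \<Sum>v\<in>V. A u * B v * (case u of [] \<Rightarrow> 0 | a # u' \<Rightarrow> if a = c then qsh q u' v w else 0))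
      = (\<Sum>u\<in>?U'. \<Sum>v\<in>V. dv c A u * B v * qsh q u v w)"
  proof -
    have "(\<Sum>u\<in>U. \<Sum>v\<in>V. A u * B v * (case u of [] \<Rightarrow> 0 | a # u' \<Rightarrow> if a = c then qsh q u' v w else 0))
        = (\<Sum>u\<in>U. case u of [] \<Rightarrow> 0 | a # u' \<Rightarrow> if a = c then (\<Sum>v\<in>V. A (c # u') * B v * qsh q u' v w) else 0)"
      by (rule sum.cong) (auto split: list.splits)
    also have "\<dots> = (\<Sum>u'\<in>?U'. \<Sum>v\<in>V. A (c # u') * B v * qsh q u' v w)"
      by (rule sum_cons_reindex) (rule Cons.prems(1))
    finally show ?thesis by (simp add: dv_def)
  qed
  have S2: "(\<Sum>u\<in>U. \<Sum>v\<in>V. A u * B v * (case v of [] \<Rightarrow> 0 | b # v' \<Rightarrow> if b = c then q powi (\<Sum>x\<leftarrow>u. ip x b) * qsh q u v' w else 0))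
      = (\<Sum>u\<in>U. \<Sum>v\<in>?V'. tw q c A u * dv c B v * qsh q u v w)"
  proof (rule sum.cong[OF refl])
    fix u
    have "(\<Sum>v\<in>V. A u * B v * (case v of [] \<Rightarrow> 0 | b # v' \<Rightarrow> if b = c then q powi (\<Sum>x\<leftarrow>u. ip x b) * qsh q u v' w else 0))
        = (\<Sum>v\<in>V. case v of [] \<Rightarrow> 0 | b # v' \<Rightarrow> if b = c then A u * B (c # v') * q powi (\<Sum>x\<leftarrow>u. ip x c) * qsh q u v' w else 0)"
      by (rule sum.cong) (auto split: list.splits)
    also have "\<dots> = (\<Sum>v'\<in>?V'. A u * B (c # v') * q powi (\<Sum>x\<leftarrow>u. ip x c) * qsh q u v' w)"
      by (rule sum_cons_reindex) (rule Cons.prems(2))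
    finally show "(\<Sum>v\<in>V. A u * B v * (case v of [] \<Rightarrow> 0 | b # v' \<Rightarrow> if b = c then q powi (\<Sum>x\<leftarrow>u. ip x b) * qsh q u v' w else 0))
        = (\<Sum>v\<in>?V'. tw q c A u * dv c B v * qsh q u v w)"
      by (simp add: tw_def dv_def mult_ac)
  qed
  have "(\<Sum>u\<in>U. \<Sum>v\<in>V. A u * B v * qsh q u v (c # w)) =
      (\<Sum>u\<in>U. \<Sum>v\<in>V. A u * B v * (case u of [] \<Rightarrow> 0 | a # u' \<Rightarrow> if a = c then qsh q u' v w else 0))
    + (\<Sum>u\<in>U. \<Sum>v\<in>V. A u * B v * (case v of [] \<Rightarrow> 0 | b # v' \<Rightarrow> if b = c then q powi (\<Sum>x\<leftarrow>u. ip x b) * qsh q u v' w else 0))"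
    by (simp add: qsh_cons_w distrib_left sum.distrib)
  then show ?case using S1 S2 IH1 IH2 by simp
qed

abbreviation Lw :: "letter list \<Rightarrow> letter list set" where
  "Lw w \<equiv> {u. length u \<le> length w}"

lemma sh_expl: "sh q A B w = (\<Sum>u\<in>Lw w. \<Sum>v\<in>Lw w. A u * B v * qsh q u v w)"
  by (rule sh_sum) (auto simp: finite_len_le)

lemma sh_add_l: "sh q (\<lambda>u. A u + A' u) B w = sh q A B w + sh q A' B w"
  by (simp add: sh_expl algebra_simps sum.distrib)

lemma sh_add_r: "sh q A (\<lambda>u. B u + B' u) w = sh q A B w + sh q A B' w"
  by (simp add: sh_expl algebra_simps sum.distrib)

lemma sh_smult_l: "sh q (\<lambda>u. c * A u) B w = c * sh q A B w"
  by (simp add: sh_expl sum_distrib_left mult_ac)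

lemma sh_smult_r: "sh q A (\<lambda>u. c * B u) w = c * sh q A B w"
  by (simp add: sh_expl sum_distrib_left mult_ac)

lemma sh_zero_l: "sh q (\<lambda>u. 0) B w = 0"
  by (simp add: sh_expl)

lemma sh_zero_r: "sh q A (\<lambda>u. 0) w = 0"
  by (simp add: sh_expl)

lemma sh_one_l: "sh q (single_word []) B w = B w"
proof -
  have "sh q (single_word []) B w = (\<Sum>u\<in>Lw w. if u = [] then (\<Sum>v\<in>Lw w. B v * qsh q [] v w) else 0)"
    unfolding sh_expl single_word_def by (rule sum.cong) auto
  also have "\<dots> = (\<Sum>v\<in>Lw w. B v * qsh q [] v w)"
    by (simp add: sum.delta finite_len_le)
  also have "\<dots> = (\<Sum>v\<in>Lw w. if v = w then B v else 0)"
    by (rule sum.cong) (auto simp: single_word_def)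
  also have "\<dots> = B w" by (simp add: sum.delta finite_len_le)
  finally show ?thesis .
qed

lemma sh_one_r: "sh q A (single_word []) w = A w"
proof -
  have "sh q A (single_word []) w = (\<Sum>u\<in>Lw w. (\<Sum>v\<in>Lw w. if v = [] then A u * qsh q u [] w else 0))"
    unfolding sh_expl single_word_def by (intro sum.cong refl) auto
  also have "\<dots> = (\<Sum>u\<in>Lw w. A u * qsh q u [] w)"
    by (simp add: sum.delta finite_len_le)
  also have "\<dots> = (\<Sum>u\<in>Lw w. if u = w then A u else 0)"
    by (rule sum.cong) (auto simp: single_word_def)
  also have "\<dots> = A w" by (simp add: sum.delta finite_len_le)
  finally show ?thesis .
qed

definition supp' :: "'f::zero vec \<Rightarrow> letter list set" where "supp' f = {u. f u \<noteq> 0}"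

lemma qstar_sh:
  assumes "finite (supp f)" "finite (supp g)"
  shows "qstar q f g = sh q f g"
proof
  fix w
  show "qstar q f g w = sh q f g w"
    unfolding qstar_def
    by (rule sh_sum[symmetric]) (use assms in \<open>auto simp: supp_def\<close>)
qed

definition rl :: "nat \<Rightarrow> 'f::zero vec \<Rightarrow> 'f vec" where
  "rl m f = (\<lambda>w. if length w = m then f w else 0)"

lemma rl_sh: "rl m (sh q A B) w = (\<Sum>i\<le>m. sh q (rl i A) (rl (m - i) B) w)"
proof -
  have "(\<Sum>i\<le>m. sh q (rl i A) (rl (m - i) B) w) =
        (\<Sum>i\<le>m. \<Sum>u\<in>Lw w. \<Sum>v\<in>Lw w. rl i A u * rl (m - i) B v * qsh q u v w)"
    by (simp add: sh_expl)
  also have "\<dots> = (\<Sum>u\<in>Lw w. \<Sum>v\<in>Lw w. \<Sum>i\<le>m. rl i A u * rl (m - i) B v * qsh q u v w)"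
    by (simp add: sum.swap[of _ "{..m}"] sum.swap[of _ "{..m}" "Lw w"])
  also have "\<dots> = (\<Sum>u\<in>Lw w. \<Sum>v\<in>Lw w. (if length w = m then A u * B v * qsh q u v w else 0))"
  proof (intro sum.cong refl)
    fix u v
    show "(\<Sum>i\<le>m. rl i A u * rl (m - i) B v * qsh q u v w) =
          (if length w = m then A u * B v * qsh q u v w else 0)"
    proof (cases "qsh q u v w = 0")
      case True then show ?thesis by simp
    next
      case False
      then have len: "length w = length u + length v" by (rule qsh_len)
      have "(\<Sum>i\<le>m. rl i A u * rl (m - i) B v * qsh q u v w) =
            (\<Sum>i\<le>m. if i = length u then (if length w = m then A u * B v * qsh q u v w else 0) else 0)"
        by (rule sum.cong) (auto simp: rl_def len)
      also have "\<dots> = (if length w = m then A u * B v * qsh q u v w else 0)"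
        using len by (simp add: sum.delta)
      finally show ?thesis .
    qed
  qed
  also have "\<dots> = rl m (sh q A B) w"
    by (simp add: rl_def sh_expl)
  finally show ?thesis ..
qed

lemma uniq:
  assumes "\<And>i. F i [] = G i []"
    "\<And>i c w. F i (c # w) = \<Psi> i c w (\<lambda>j. F j w)"
    "\<And>i c w. G i (c # w) = \<Psi> i c w (\<lambda>j. G j w)"
  shows "F i w = G i w"
proof (induction w arbitrary: i)
  case Nil then show ?case using assms(1) .
next
  case (Cons c w)
  have "(\<lambda>j. F j w) = (\<lambda>j. G j w)" using Cons.IH by auto
  then show ?case using assms(2,3) by metis
qed

fun pe :: "(nat \<Rightarrow> 'f::field) \<Rightarrow> (nat \<Rightarrow> 'f) \<Rightarrow> nat \<Rightarrow> letter list \<Rightarrow> 'f" where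
  "pe u d h [] = (if h = 0 then 1 else 0)"
| "pe u d h (X # w) = u h * pe u d (Suc h) w"
| "pe u d h (Y # w) = (if h = 0 then 0 else d h * pe u d (h - 1) w)"

definition cX :: "letter list \<Rightarrow> nat" where "cX w = length (filter (\<lambda>c. c = X) w)"
definition cY :: "letter list \<Rightarrow> nat" where "cY w = length (filter (\<lambda>c. c = Y) w)"

lemma cX_simps[simp]: "cX [] = 0" "cX (X # w) = Suc (cX w)" "cX (Y # w) = cX w"
  by (auto simp: cX_def)
lemma cY_simps[simp]: "cY [] = 0" "cY (X # w) = cY w" "cY (Y # w) = Suc (cY w)"
  by (auto simp: cY_def)

lemma len_cXY: "length w = cX w + cY w"
proof (induction w)
  case (Cons c w) then show ?case by (cases c) auto
qed simp

lemma pe_bal: "pe u d h w \<noteq> 0 \<Longrightarrow> cX w + h = cY w"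
proof (induction w arbitrary: h)
  case Nil then show ?case by (auto split: if_splits)
next
  case (Cons c w)
  show ?case
  proof (cases c)
    case X
    with Cons show ?thesis by fastforce
  next
    case Y
    with Cons.prems have "h \<noteq> 0" "pe u d (h - 1) w \<noteq> 0" by (auto split: if_splits)
    with Cons.IH[of "h - 1"] Y show ?thesis by auto
  qed
qed

lemma ip_sum_X: "(\<Sum>x\<leftarrow>w. ip x X) = 2 * int (cX w) - 2 * int (cY w)"
proof (induction w)
  case (Cons c w) then show ?case by (cases c) (auto simp: ip_def)
qed simp

lemma ip_sum_Y: "(\<Sum>x\<leftarrow>w. ip x Y) = 2 * int (cY w) - 2 * int (cX w)"
proof (induction w)
  case (Cons c w) then show ?case by (cases c) (auto simp: ip_def)
qed simp

lemma tw_pe_X: "tw q X (pe u d h) = (\<lambda>w. q powi (- 2 * int h) * pe u d h w)"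
proof
  fix w
  show "tw q X (pe u d h) w = q powi (- 2 * int h) * pe u d h w"
  proof (cases "pe u d h w = 0")
    case False
    then have "cX w + h = cY w" by (rule pe_bal)
    then have "(\<Sum>x\<leftarrow>w. ip x X) = - 2 * int h" by (simp add: ip_sum_X)
    then show ?thesis by (simp add: tw_def)
  qed (simp add: tw_def)
qed

lemma tw_pe_Y: "tw q Y (pe u d h) = (\<lambda>w. q powi (2 * int h) * pe u d h w)"
proof
  fix w
  show "tw q Y (pe u d h) w = q powi (2 * int h) * pe u d h w"
  proof (cases "pe u d h w = 0")
    case False
    then have "cX w + h = cY w" by (rule pe_bal)
    then have "(\<Sum>x\<leftarrow>w. ip x Y) = 2 * int h" by (simp add: ip_sum_Y)
    then show ?thesis by (simp add: tw_def)
  qed (simp add: tw_def)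
qed

lemma dv_pe_X: "dv X (pe u d h) = (\<lambda>w. u h * pe u d (Suc h) w)"
  by (simp add: dv_def)

lemma dv_pe_Y: "dv Y (pe u d h) = (\<lambda>w. (if h = 0 then 0 else d h) * pe u d (h - 1) w)"
  by (auto simp: dv_def)

lemma sh_pe_X: "sh q (pe u1 d1 h) (pe u2 d2 k) (X # w) =
   u1 h * sh q (pe u1 d1 (Suc h)) (pe u2 d2 k) w + q powi (- 2 * int h) * u2 k * sh q (pe u1 d1 h) (pe u2 d2 (Suc k)) w"
  by (simp add: dv_pe_X tw_pe_X sh_smult_l sh_smult_r)

lemma sh_pe_Y: "sh q (pe u1 d1 h) (pe u2 d2 k) (Y # w) =
   (if h = 0 then 0 else d1 h) * sh q (pe u1 d1 (h - 1)) (pe u2 d2 k) w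
   + q powi (2 * int h) * (if k = 0 then 0 else d2 k) * sh q (pe u1 d1 h) (pe u2 d2 (k - 1)) w"
  by (simp add: dv_pe_Y tw_pe_Y sh_smult_l sh_smult_r)

lemma prod_rule:
  assumes hx: "\<And>h k. \<rho> h k * uC (h + k) = u1 h * \<rho> (Suc h) k + q powi (- 2 * int h) * u2 k * \<rho> h (Suc k)"
    and hy: "\<And>h k. \<rho> h k * (if h + k = 0 then 0 else dC (h + k)) =
        (if h = 0 then 0 else d1 h) * \<rho> (h - 1) k + q powi (2 * int h) * (if k = 0 then 0 else d2 k) * \<rho> h (k - 1)"
    and h0: "\<rho> 0 0 = 1"
  shows "sh q (pe u1 d1 h) (pe u2 d2 k) w = \<rho> h k * pe uC dC (h + k) w"
proof -
  let ?F = "\<lambda>i. sh q (pe u1 d1 (fst i)) (pe u2 d2 (snd i))"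
  let ?G = "\<lambda>i w. \<rho> (fst i) (snd i) * pe uC dC (fst i + snd i) w"
  let ?\<Psi> = "\<lambda>i c w \<phi>. case c of
      X \<Rightarrow> u1 (fst i) * \<phi> (Suc (fst i), snd i) + q powi (- 2 * int (fst i)) * u2 (snd i) * \<phi> (fst i, Suc (snd i))
    | Y \<Rightarrow> (if fst i = 0 then 0 else d1 (fst i)) * \<phi> (fst i - 1, snd i)
          + q powi (2 * int (fst i)) * (if snd i = 0 then 0 else d2 (snd i)) * \<phi> (fst i, snd i - 1)"
  have "?F (h, k) w = ?G (h, k) w"
  proof (rule uniq[where \<Psi> = ?\<Psi>])
    fix i :: "nat \<times> nat"
    show "?F i [] = ?G i []" using h0 by (cases i) auto
  next
    fix i :: "nat \<times> nat" and c w
    show "?F i (c # w) = ?\<Psi> i c w (\<lambda>j. ?F j w)"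
      by (cases i; cases c) (simp_all del: sh.simps add: sh_pe_X sh_pe_Y)
  next
    fix i :: "nat \<times> nat" and c w
    obtain h k where i: "i = (h, k)" by (cases i)
    show "?G i (c # w) = ?\<Psi> i c w (\<lambda>j. ?G j w)"
    proof (cases c)
      case X
      have "?G i (c # w) = (\<rho> h k * uC (h + k)) * pe uC dC (Suc (h + k)) w"
        using X i by (simp add: mult.assoc)
      also have "\<dots> = (u1 h * \<rho> (Suc h) k + q powi (- 2 * int h) * u2 k * \<rho> h (Suc k)) * pe uC dC (Suc (h + k)) w"
        by (simp only: hx)
      also have "\<dots> = ?\<Psi> i c w (\<lambda>j. ?G j w)"
        using X i by (simp add: algebra_simps)
      finally show ?thesis .
    next
      case Y
      show ?thesis
      proof (cases h)
        case 0
        then show ?thesis using Y i hy[of 0 k] by (cases k) (auto simp: algebra_simps)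
      next
        case (Suc h')
        have "?G i (c # w) = (\<rho> h k * (if h + k = 0 then 0 else dC (h + k))) * pe uC dC (h + k - 1) w"
          using Y i Suc by (simp add: mult.assoc)
        also have "\<dots> = ((if h = 0 then 0 else d1 h) * \<rho> (h - 1) k + q powi (2 * int h) * (if k = 0 then 0 else d2 k) * \<rho> h (k - 1))
            * pe uC dC (h + k - 1) w"
          by (simp only: hy)
        also have "\<dots> = ?\<Psi> i c w (\<lambda>j. ?G j w)"
          using Y i Suc by (cases k) (simp_all add: algebra_simps)
        finally show ?thesis .
      qed
    qed
  qed
  then show ?thesis by simp
qed

definition qn :: "'f::field \<Rightarrow> nat \<Rightarrow> 'f" where
  "qn q n = (q ^ n - inverse q ^ n) / (q - inverse q)"

lemma qint_nat: "q \<noteq> 0 \<Longrightarrow> qint q (int n) = qn q n"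
  by (simp add: qint_def qn_def power_int_minus power_inverse)

lemma pinv: "(q::'f::field) \<noteq> 0 \<Longrightarrow> q ^ n * inverse q ^ n = 1"
  by (simp add: power_inverse)

lemma at1: "(A::'f::field) * A' = 1 \<Longrightarrow> B * B' = 1 \<Longrightarrow> B*((A*B - A'*B')*D) = (A - A')*D + A*B*((B-B')*D)"
  by algebra

lemma qn_add:
  assumes "(q::'f::field) \<noteq> 0"
  shows "q ^ k * qn q (h + k) = qn q h + q ^ (h + k) * qn q k"
proof -
  have a: "q ^ h * inverse q ^ h = 1" "q ^ k * inverse q ^ k = 1" using assms by (simp_all add: pinv)
  show ?thesis unfolding qn_def divide_inverse power_add using at1[OF a] by simp
qed

lemma powi_neg2: "(q::'f::field) powi (- 2 * int h) = inverse q ^ (2 * h)"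
  by (simp add: power_int_minus power_inverse power_int_def nat_mult_distrib)

lemma powi_pos2: "(q::'f::field) powi (2 * int h) = q ^ (2 * h)"
proof -
  have "2 * int h = int (2 * h)" by simp
  then show ?thesis by (simp only: power_int_of_nat)
qed

definition dH :: "'f::field \<Rightarrow> nat \<Rightarrow> 'f" where
  "dH q k = q ^ (k - 1) * qn q k"

definition bb :: "'f::field \<Rightarrow> 'f" where "bb q = inverse (q - inverse q)"

definition s2 :: "'f::field \<Rightarrow> 'f" where "s2 q = q ^ 2 * bb q"

fun alpha :: "'f::field \<Rightarrow> nat \<Rightarrow> 'f" where
  "alpha q 0 = 1"
| "alpha q (Suc h) = alpha q h * inverse q ^ h * inverse (s2 q)"

lemma alg1: "(A::'f::field) * A' = 1 \<Longrightarrow> q * i = 1 \<Longrightarrow> D * (q - i) = 1 \<Longrightarrow>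
   1 = (A * q^2 - A' * i^2) * D * A' * (i^2 * (q - i)) + A'^2 * i^4"
  by algebra

lemma alg2: "(A::'f::field) * A' = 1 \<Longrightarrow> B * B' = 1 \<Longrightarrow> q * i = 1 \<Longrightarrow>
   A' * (A * B * q * ((A * B * q^2 - A' * B' * i^2) * D)) = (A * q - A' * i) * D + (A * A * q^2) * B * ((B * q - B' * i) * D) * A'"
  by algebra

lemma nat_cases3: "(h = 0 \<Longrightarrow> P) \<Longrightarrow> (h = 1 \<Longrightarrow> P) \<Longrightarrow> (\<And>n. h = Suc (Suc n) \<Longrightarrow> P) \<Longrightarrow> P"
  by (metis One_nat_def not0_implies_Suc)

fun gam :: "'f::field \<Rightarrow> nat \<Rightarrow> 'f" where
  "gam q 0 = 1"
| "gam q (Suc 0) = inverse q ^ 2 - 1"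
| "gam q (Suc (Suc n)) = 0"

context
  fixes q :: "'f::field"
  assumes q0: "q \<noteq> 0" and q1: "q - inverse q \<noteq> 0"
begin

lemma bb_inv: "bb q * (q - inverse q) = 1"
  using q1 by (simp add: bb_def)

lemma inv_s2: "inverse (s2 q) = inverse q ^ 2 * (q - inverse q)"
  using q0 q1 by (simp add: s2_def bb_def power_inverse)

lemma P1x: "alpha q h * 1 = qn q (h + 2) * alpha q (Suc h) + q powi (- 2 * int h) * inverse q ^ 4 * alpha q h"
proof -
  have c: "1 = qn q (h + 2) * inverse q ^ h * inverse (s2 q) + inverse q ^ (2 * h) * inverse q ^ 4"
    unfolding inv_s2 qn_def divide_inverse mult_2 power_add
    using alg1[of "q ^ h" "inverse q ^ h" q "inverse q" "inverse (q - inverse q)"] q0 q1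
    by (simp add: pinv mult_ac power2_eq_square)
  have "qn q (h + 2) * alpha q (Suc h) + q powi (- 2 * int h) * inverse q ^ 4 * alpha q h
     = alpha q h * (qn q (h + 2) * inverse q ^ h * inverse (s2 q) + inverse q ^ (2 * h) * inverse q ^ 4)"
    by (simp only: powi_neg2 alpha.simps) (simp add: algebra_simps)
  then show ?thesis using c by simp
qed

lemma core2: "inverse q ^ h' * (q ^ (h' + k' + 1) * qn q (h' + k' + 2)) =
    qn q (h' + 1) + q ^ (2 * h' + 2) * q ^ k' * qn q (k' + 1) * inverse q ^ h'"
proof -
  have e: "q ^ h' * inverse q ^ h' = 1" "q ^ k' * inverse q ^ k' = 1" "q * inverse q = 1"
    using q0 by (simp_all add: pinv)
  show ?thesis
    using alg2[OF e, of "inverse (q - inverse q)"]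
    unfolding qn_def divide_inverse mult_2 power_add
    by (simp add: algebra_simps power2_eq_square)
qed

lemma coreH: assumes that: "h = Suc h'" shows "dH q (h + k) = q ^ h' * qn q h + q ^ (2 * h) * (if k = 0 then 0 else dH q k)"
proof (cases k)
  case 0 then show ?thesis using that by (simp add: dH_def)
next
  case (Suc k')
  have e: "q ^ h' * inverse q ^ h' = 1" using q0 by (simp add: pinv)
  let ?X = "q ^ (h' + k' + 1) * qn q (h' + k' + 2)"
  let ?Y = "qn q (h' + 1)" and ?Z = "q ^ (2 * h' + 2) * q ^ k' * qn q (k' + 1)"
  have a: "q ^ h' * (inverse q ^ h' * ?X) = (q ^ h' * inverse q ^ h') * ?X" by (simp only: mult.assoc)
  have b: "q ^ h' * (?Y + ?Z * inverse q ^ h') = q ^ h' * ?Y + ?Z * (q ^ h' * inverse q ^ h')"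
    by (simp only: distrib_left mult.assoc mult.commute mult.left_commute)
  have "?X = (q ^ h' * inverse q ^ h') * ?X" using e by simp
  also have "\<dots> = q ^ h' * (inverse q ^ h' * ?X)" by (simp only: a)
  also have "\<dots> = q ^ h' * (?Y + ?Z * inverse q ^ h')" by (simp only: core2)
  also have "\<dots> = q ^ h' * ?Y + ?Z * (q ^ h' * inverse q ^ h')" by (simp only: b)
  also have "\<dots> = q ^ h' * ?Y + ?Z" using e by simp
  finally have "?X = q ^ h' * ?Y + ?Z" .
  then have "q ^ (h' + k' + 1) * qn q (h' + k' + 2) = q ^ h' * qn q (h' + 1) + q ^ (2 * h' + 2) * (q ^ k' * qn q (k' + 1))"
    by (simp add: mult.assoc)
  then show ?thesis using that Suc by (simp add: dH_def)
qed

lemma P1y: "alpha q h * (if h + k = 0 then 0 else s2 q * dH q (h + k)) =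
   (if h = 0 then 0 else qn q h) * alpha q (h - 1) + q powi (2 * int h) * (if k = 0 then 0 else s2 q * dH q k) * alpha q h"
proof (cases h)
  case 0 then show ?thesis by simp
next
  case (Suc h')
  have s2nz: "s2 q \<noteq> 0" using q0 q1 by (simp add: s2_def bb_def)
  have core: "inverse q ^ h' * dH q (h + k) = qn q h + q ^ (2 * h) * (if k = 0 then 0 else dH q k) * inverse q ^ h'"
  proof (cases k)
    case 0 then show ?thesis using Suc q0 by (simp add: dH_def pinv mult.assoc[symmetric] mult.commute[of "inverse q ^ h'"])
  next
    case (Suc k')
    then show ?thesis using core2[of h' k'] \<open>h = Suc h'\<close> by (simp add: dH_def algebra_simps)
  qed
  have "alpha q h * (if h + k = 0 then 0 else s2 q * dH q (h + k))
      = alpha q h' * (inverse (s2 q) * s2 q) * (inverse q ^ h' * dH q (h + k))"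
    using Suc by (simp add: algebra_simps)
  also have "\<dots> = alpha q h' * (qn q h + q ^ (2 * h) * (if k = 0 then 0 else dH q k) * inverse q ^ h')"
    using s2nz core by simp
  also have "\<dots> = (if h = 0 then 0 else qn q h) * alpha q (h - 1) + q powi (2 * int h) * (if k = 0 then 0 else s2 q * dH q k) * alpha q h"
    unfolding powi_pos2 using Suc s2nz by (simp add: algebra_simps)
  finally show ?thesis .
qed

lemma P1: "sh q (pe (\<lambda>h. qn q (h + 2)) (qn q) h) (pe (\<lambda>_. inverse q ^ 4) (\<lambda>k. s2 q * dH q k) k) w
    = alpha q h * pe (\<lambda>_. 1) (\<lambda>k. s2 q * dH q k) (h + k) w"
  by (rule prod_rule[where \<rho> = "\<lambda>h k. alpha q h"]) (use P1x P1y in auto)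


lemma P4: "sh q (pe (\<lambda>h. if h = 0 then 1 else 0) (\<lambda>h. if h = 1 then - inverse q else 0) h) (pe (\<lambda>_. 1) (\<lambda>k. bb q * dH q k) k) w
    = gam q h * pe (\<lambda>_. inverse q ^ 2) (\<lambda>k. bb q * dH q k) (h + k) w"
proof (rule prod_rule[where \<rho> = "\<lambda>h k. gam q h"])
  fix h k :: nat
  show "gam q h * inverse q ^ 2 = (if h = 0 then 1 else 0) * gam q (Suc h) + q powi (- 2 * int h) * 1 * gam q h"
    by (unfold powi_neg2) (rule nat_cases3[of h], simp_all)
  show "gam q h * (if h + k = 0 then 0 else bb q * dH q (h + k)) =
        (if h = 0 then 0 else if h = 1 then - inverse q else 0) * gam q (h - 1) +
        q powi (2 * int h) * (if k = 0 then 0 else bb q * dH q k) * gam q h"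
  proof (rule nat_cases3[of h])
    assume "h = 0" then show ?thesis by simp
  next
    fix n assume "h = Suc (Suc n)" then show ?thesis by simp
  next
    assume 2: "h = 1"
    have c: "dH q (1 + k) = 1 + q ^ 2 * (if k = 0 then 0 else dH q k)"
      using coreH[of 1 0 k] q1 by (simp add: qn_def)
    have g: "(inverse q ^ 2 - 1) * bb q = - inverse q"
      using q0 q1 by (simp add: bb_def field_simps power2_eq_square)
    have gen: "\<And>(G::'f) b m Q Xx. G * b = m \<Longrightarrow> G * (b * (1 + Q * Xx)) = m * 1 + Q * (b * Xx) * G"
      by (simp add: algebra_simps)
    have i: "(if k = 0 then 0 else bb q * dH q k) = bb q * (if k = 0 then 0 else dH q k)" by simp
    show ?thesis
      unfolding powi_pos2 i using 2 c gen[OF g, of "q ^ 2" "if k = 0 then 0 else dH q k"] by simp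
  qed
qed simp

end

fun rr :: "'f::field \<Rightarrow> nat \<Rightarrow> 'f" where
  "rr q 0 = 1"
| "rr q (Suc 0) = q - inverse q"
| "rr q (Suc (Suc j)) = rr q (Suc j) * (1 - inverse q ^ (2 * Suc j)) / qn q (Suc (Suc j))"

definition uM :: "'f::field \<Rightarrow> nat \<Rightarrow> 'f" where
  "uM q j = (if j = 0 then 0 else qn q (Suc j))"
definition dM :: "'f::field \<Rightarrow> nat \<Rightarrow> 'f" where
  "dM q j = (if j = 1 then 1 else qn q (j - 1))"

lemma pow2n: "(x::'f::field) ^ (2 * n) = x ^ n * x ^ n"
  by (simp add: mult_2 power_add)

context
  fixes q :: "'f::field"
  assumes q0: "q \<noteq> 0" and qr: "\<And>n. 0 < n \<Longrightarrow> q ^ n \<noteq> 1"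
begin

lemma q1: "q - inverse q \<noteq> 0"
proof
  assume "q - inverse q = 0"
  then have "q * q = q * inverse q" by simp
  then have "q ^ 2 = 1" using q0 by (simp add: power2_eq_square)
  with qr[of 2] show False by simp
qed

lemma qn_nz: "0 < n \<Longrightarrow> qn q n \<noteq> 0"
proof
  assume n: "0 < n" and z: "qn q n = 0"
  then have "q ^ n = inverse q ^ n" using q1 by (simp add: qn_def)
  then have "q ^ n * q ^ n = q ^ n * inverse q ^ n" by simp
  then have "q ^ n * q ^ n = 1" using q0 by (simp add: pinv)
  then have "q ^ (2 * n) = 1" by (simp add: mult_2 power_add)
  with qr[of "2 * n"] n show False by simp
qed

lemma P2: "sh q (pe (uM q) (dM q) j) (pe (\<lambda>_. 1) (\<lambda>k. bb q * dH q k) k) w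
    = rr q j * pe (\<lambda>_. 1) (\<lambda>k. bb q * dH q k) (j + k) w"
proof (rule prod_rule[where \<rho> = "\<lambda>j k. rr q j"])
  fix j k :: nat
  show "rr q j * 1 = uM q j * rr q (Suc j) + q powi (- 2 * int j) * 1 * rr q j"
  proof (cases j)
    case 0 then show ?thesis by (simp add: uM_def)
  next
    case (Suc j')
    have nz: "qn q (Suc j) \<noteq> 0" using qn_nz by simp
    have "rr q (Suc j) = rr q j * (1 - inverse q ^ (2 * j)) / qn q (Suc j)" using Suc by simp
    then have "uM q j * rr q (Suc j) = rr q j * (1 - inverse q ^ (2 * j))"
      using nz Suc by (simp add: uM_def)
    then show ?thesis unfolding powi_neg2 by (simp add: algebra_simps)
  qed
  show "rr q j * (if j + k = 0 then 0 else bb q * dH q (j + k)) =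
        (if j = 0 then 0 else dM q j) * rr q (j - 1) + q powi (2 * int j) * (if k = 0 then 0 else bb q * dH q k) * rr q j"
  proof (cases j)
    case 0 then show ?thesis by simp
  next
    case (Suc j')
    have c: "dH q (j + k) = q ^ j' * qn q j + q ^ (2 * j) * (if k = 0 then 0 else dH q k)"
      by (rule coreH[OF q0 q1 Suc])
    have key: "rr q j * bb q * q ^ j' * qn q j = dM q j * rr q j'"
    proof (cases j')
      case 0 then show ?thesis using Suc q1 by (simp add: dM_def qn_def bb_def)
    next
      case (Suc j'')
      have nz: "qn q j \<noteq> 0" using qn_nz \<open>j = Suc j'\<close> by simp
      have rj: "rr q j = rr q j' * (1 - inverse q ^ (2 * j')) / qn q j" using Suc \<open>j = Suc j'\<close> by simp
      have e: "q ^ j' * inverse q ^ j' = 1" using q0 by (simp add: pinv)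
      have cc: "(1 - inverse q ^ (2 * j')) * bb q * q ^ j' = qn q j'"
      proof -
        have "(1 - inverse q ^ (2 * j')) * q ^ j' = q ^ j' - inverse q ^ j' * (q ^ j' * inverse q ^ j')"
          unfolding pow2n by (simp add: algebra_simps)
        then have "(1 - inverse q ^ (2 * j')) * q ^ j' = q ^ j' - inverse q ^ j'" using e by simp
        then show ?thesis by (simp add: qn_def bb_def divide_inverse algebra_simps)
      qed
      have rj': "rr q j * qn q j = rr q j' * (1 - inverse q ^ (2 * j'))"
        using rj nz by simp
      have "rr q j * bb q * q ^ j' * qn q j = (rr q j * qn q j) * (bb q * q ^ j')"
        by (simp only: mult_ac)
      also have "\<dots> = rr q j' * ((1 - inverse q ^ (2 * j')) * bb q * q ^ j')"
        by (simp only: rj') (simp only: mult_ac)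
      finally have "rr q j * bb q * q ^ j' * qn q j = rr q j' * ((1 - inverse q ^ (2 * j')) * bb q * q ^ j')" .
      also have "\<dots> = dM q j * rr q j'" using cc \<open>j = Suc j'\<close> Suc by (simp add: dM_def)
      finally show ?thesis .
    qed
    have "rr q j * (bb q * dH q (j + k)) = rr q j * bb q * q ^ j' * qn q j + q ^ (2 * j) * (if k = 0 then 0 else bb q * dH q k) * rr q j"
      unfolding c by (simp add: algebra_simps)
    then show ?thesis unfolding powi_pos2 using key Suc by simp
  qed
qed simp

end

abbreviation LL :: "'f::field \<Rightarrow> 'f vec" where
  "LL q \<equiv> lcons X (pe (uM q) (dM q) 1)"

abbreviation YY :: "'f::field \<Rightarrow> nat \<Rightarrow> 'f vec" where
  "YY q k \<equiv> pe (\<lambda>_. 1) (\<lambda>k. bb q * dH q k) k"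

lemma LL_bal: "LL q w \<noteq> 0 \<Longrightarrow> cX w = cY w"
  by (cases w) (auto simp: lcons_def split: if_splits dest!: pe_bal)

lemma tw_LL: "tw q c (LL q) = LL q"
proof
  fix w
  show "tw q c (LL q) w = LL q w"
  proof (cases "LL q w = 0")
    case False
    then have "cX w = cY w" by (rule LL_bal)
    then have "(\<Sum>x\<leftarrow>w. ip x c) = 0" by (cases c) (simp_all add: ip_sum_X ip_sum_Y)
    then show ?thesis by (simp add: tw_def)
  qed (simp add: tw_def)
qed

lemma dv_LL_X: "dv X (LL q) = pe (uM q) (dM q) 1"
  by (simp add: dv_def lcons_def)

lemma dv_LL_Y: "dv Y (LL q) = (\<lambda>_. 0)"
  by (simp add: dv_def lcons_def)

lemma P3:
  fixes q :: "'f::field"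
  assumes q0: "q \<noteq> 0" and qr: "\<And>n. 0 < n \<Longrightarrow> q ^ n \<noteq> 1"
  shows "sh q (LL q) (YY q k) w = rr q 1 * (of_nat (cY w) - of_nat k) * YY q k w"
proof -
  let ?F = "\<lambda>k. sh q (LL q) (YY q k)"
  let ?G = "\<lambda>k w. rr q 1 * (of_nat (cY w) - of_nat k) * YY q k w"
  let ?\<Psi> = "\<lambda>k c w \<phi>. case c of X \<Rightarrow> rr q 1 * YY q (Suc k) w + \<phi> (Suc k)
      | Y \<Rightarrow> (if k = 0 then 0 else bb q * dH q k) * \<phi> (k - 1)"
  show ?thesis
  proof (rule uniq[where F = ?F and G = ?G and \<Psi> = ?\<Psi>])
    fix k
    show "?F k [] = ?G k []" by (simp add: lcons_def)
  next
    fix k c w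
    show "?F k (c # w) = ?\<Psi> k c w (\<lambda>j. ?F j w)"
    proof (cases c)
      case X
      have "sh q (pe (uM q) (dM q) 1) (YY q k) w = rr q 1 * YY q (Suc k) w"
        using P2[OF q0 qr, of 1 k w] by simp
      then show ?thesis using X
        by (simp add: tw_LL tw_LL[simplified One_nat_def] dv_LL_X dv_LL_X[simplified One_nat_def] dv_pe_X sh_smult_r)
    next
      case Y
      then show ?thesis by (simp add: tw_LL tw_LL[simplified One_nat_def] dv_LL_Y dv_LL_Y[simplified One_nat_def] dv_pe_Y sh_smult_r sh_zero_l)
    qed
  next
    fix k c w
    show "?G k (c # w) = ?\<Psi> k c w (\<lambda>j. ?G j w)"
    proof (cases c)
      case X
      then show ?thesis by (simp add: algebra_simps)
    next
      case Y
      then show ?thesis by (cases k) (simp_all add: algebra_simps)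
    qed
  qed
qed

lemma rsnoc_cons: "rsnoc f b (c # w) = (if w = [] then (if c = b then f [] else 0) else rsnoc (dv c f) b w)"
  by (simp add: rsnoc_def dv_def)

lemma rsnoc_smult: "rsnoc (\<lambda>w. (a::'f::field) * f w) b = (\<lambda>w. a * rsnoc f b w)"
  by (rule ext) (simp add: rsnoc_def)

lemma pe_M0: "pe (uM q) (dM q) 0 w = (if w = [] then 1 else 0)"
proof (cases w)
  case (Cons c w') then show ?thesis by (cases c) (simp_all add: uM_def)
qed simp

lemma M_rsnoc: "pe (uM q) (dM q) (Suc j) w = rsnoc (pe (\<lambda>h. qn q (h + 2)) (qn q) j) Y w"
proof -
  let ?E = "pe (\<lambda>h. qn q (h + 2)) (qn q)"
  let ?F = "\<lambda>j. pe (uM q) (dM q) (Suc j)"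
  let ?G = "\<lambda>j. rsnoc (?E j) Y"
  let ?\<Psi> = "\<lambda>j c w \<phi>. case c of X \<Rightarrow> qn q (j + 2) * \<phi> (Suc j)
      | Y \<Rightarrow> (if j = 0 then (if w = [] then 1 else 0) else qn q j * \<phi> (j - 1))"
  show ?thesis
  proof (rule uniq[where F = ?F and G = ?G and \<Psi> = ?\<Psi>])
    fix j
    show "?F j [] = ?G j []" by (simp add: rsnoc_def)
  next
    fix j c w
    show "?F j (c # w) = ?\<Psi> j c w (\<lambda>j. ?F j w)"
      by (cases c; cases j) (simp_all add: uM_def dM_def pe_M0)
  next
    fix j c w
    show "?G j (c # w) = ?\<Psi> j c w (\<lambda>j. ?G j w)"
    proof (cases c)
      case X
      then show ?thesis by (simp add: rsnoc_cons dv_pe_X rsnoc_smult) (simp add: rsnoc_def)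
    next
      case Y
      show ?thesis
      proof (cases j)
        case 0
        then show ?thesis using Y by (simp add: rsnoc_cons dv_pe_Y rsnoc_def)
      next
        case (Suc j')
        then show ?thesis using Y by (simp add: rsnoc_cons dv_pe_Y rsnoc_smult) (simp add: rsnoc_def)
      qed
    qed
  qed
qed

lemma lcons_rsnoc: "lcons X (rsnoc f Y) = rsnoc (lcons X f) Y"
proof
  fix w
  show "lcons X (rsnoc f Y) w = rsnoc (lcons X f) Y w"
  proof (cases w)
    case (Cons c w')
    then show ?thesis by (cases w') (auto simp: lcons_def rsnoc_def)
  qed (simp add: lcons_def rsnoc_def)
qed

lemma LL_eq: "LL q = rsnoc (lcons X (pe (\<lambda>h. qn q (h + 2)) (qn q) 0)) Y"
proof -
  have "pe (uM q) (dM q) 1 = rsnoc (pe (\<lambda>h. qn q (h + 2)) (qn q) 0) Y"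
    using M_rsnoc[of q 0] by auto
  then show ?thesis by (simp add: lcons_rsnoc)
qed

lemma rl_LL: "rl (2 * Suc m) (LL q) = rsnoc (lcons X (rl (2 * m) (pe (\<lambda>h. qn q (h + 2)) (qn q) 0))) Y"
  unfolding LL_eq
proof
  fix w
  show "rl (2 * Suc m) (rsnoc (lcons X (pe (\<lambda>h. qn q (h + 2)) (qn q) 0)) Y) w =
        rsnoc (lcons X (rl (2 * m) (pe (\<lambda>h. qn q (h + 2)) (qn q) 0))) Y w"
  proof (cases "butlast w")
    case (Cons c l)
    have a: "length (butlast w) = Suc (length l)" using Cons by simp
    have "w \<noteq> []" using Cons by auto
    then have "length w = Suc (Suc (length l))" using a by (simp add: length_butlast)
    then show ?thesis using Cons by (auto simp: rl_def rsnoc_def lcons_def)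
  qed (auto simp: rl_def rsnoc_def lcons_def)
qed

lemma rl0_LL: "rl 0 (LL q) = (\<lambda>_. 0)"
  by (auto simp: rl_def lcons_def)

lemma psum_0[simp]: "psum w 0 = 0" by (simp add: psum_def)
lemma psum_Cons[simp]: "psum (c # w) (Suc i) = lbar c + psum w i" by (simp add: psum_def)

lemma all_Suc_ivl: "(\<forall>i\<in>{1..Suc n}. P i) \<longleftrightarrow> P 1 \<and> (\<forall>j\<in>{1..n}. P (Suc j))"
proof (intro iffI conjI ballI)
  assume a: "P 1 \<and> (\<forall>j\<in>{1..n}. P (Suc j))"
  fix i assume i: "i \<in> {1..Suc n}"
  show "P i"
  proof (cases i)
    case 0 then show ?thesis using i by simp
  next
    case (Suc j)
    show ?thesis
    proof (cases "j = 0")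
      case True then show ?thesis using a Suc by simp
    next
      case False then have "j \<in> {1..n}" using i Suc by auto
      then show ?thesis using a Suc by simp
    qed
  qed
qed auto

lemma prod_Suc_ivl: "(\<Prod>i\<in>{1..Suc n}. f i) = f 1 * (\<Prod>j\<in>{1..n}. f (Suc j))"
proof -
  have "(\<Prod>i\<in>{1..Suc n}. f i) = (\<Prod>i\<in>{0..n}. f (Suc i))"
    using prod.atLeast_Suc_atMost_Suc_shift[of f 0 n] by simp
  also have "\<dots> = f 1 * (\<Prod>i\<in>{1..n}. f (Suc i))"
    by (simp add: prod.atLeast_Suc_atMost)
  finally show ?thesis .
qed

lemma E_A: "(\<forall>i\<in>{1..length (c # w)}. 0 \<le> int h + psum (c # w) i) \<longleftrightarrow>
    0 \<le> int h + lbar c \<and> (\<forall>j\<in>{1..length w}. 0 \<le> (int h + lbar c) + psum w j)"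
  unfolding length_Cons all_Suc_ivl
  by (simp add: add.assoc del: One_nat_def) (simp add: psum_def)

lemma E_C: "(\<Prod>i\<in>{1..length (c # w)}. qint q (1 + int h + psum (c # w) i)) =
    qint q (1 + int h + lbar c) * (\<Prod>j\<in>{1..length w}. qint q (1 + (int h + lbar c) + psum w j))"
  unfolding length_Cons prod_Suc_ivl
  by (simp add: add.assoc del: One_nat_def) (simp add: psum_def)

lemma pe_E_expl:
  assumes q0: "(q::'f::field) \<noteq> 0"
  shows "pe (\<lambda>h. qn q (h + 2)) (qn q) h w =
    (if (\<forall>i\<in>{1..length w}. 0 \<le> int h + psum w i) \<and> int h + psum w (length w) = 0
     then \<Prod>i\<in>{1..length w}. qint q (1 + int h + psum w i) else 0)"
proof (induction w arbitrary: h)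
  case Nil then show ?case by simp
next
  case (Cons c w)
  have B: "int h + psum (c # w) (length (c # w)) = (int h + lbar c) + psum w (length w)" by simp
  show ?case
  proof (cases c)
    case X
    have e: "qn q (h + 2) = qint q (1 + int h + lbar c)"
      using qint_nat[OF q0, of "h + 2"] X by (simp add: lbar_def add.commute)
    have i: "int (Suc h) = int h + lbar c" using X by (simp add: lbar_def)
    have nn: "0 \<le> int h + lbar c" using X by (simp add: lbar_def)
    have pX: "pe (\<lambda>h. qn q (h + 2)) (qn q) h (c # w) = qn q (h + 2) * pe (\<lambda>h. qn q (h + 2)) (qn q) (Suc h) w"
      using X by simp
    show ?thesis
      unfolding E_A E_C B pX Cons.IH[of "Suc h", unfolded i] e using nn by simp
  next
    case Y
    show ?thesis
    proof (cases h)
      case 0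
      have "\<not> 0 \<le> int h + lbar c" using 0 Y by (simp add: lbar_def)
      then show ?thesis unfolding E_A using Y 0 by simp
    next
      case (Suc h')
      have e: "qn q h = qint q (1 + int h + lbar c)"
        using qint_nat[OF q0, of h] Y by (simp add: lbar_def)
      have i: "int h' = int h + lbar c" using Y Suc by (simp add: lbar_def)
      have nn: "0 \<le> int h + lbar c" using Y Suc by (simp add: lbar_def)
      have pY: "pe (\<lambda>h. qn q (h + 2)) (qn q) h (c # w) = qn q h * pe (\<lambda>h. qn q (h + 2)) (qn q) h' w"
        using Y Suc by simp
      show ?thesis
        unfolding E_A E_C B pY Cons.IH[of h', unfolded i] e using nn by simp
    qed
  qed
qed

lemma Cat_eq:
  assumes q0: "(q::'f::field_char_0) \<noteq> 0" and q1: "q - inverse q \<noteq> 0"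
  shows "Cat q n = rl (2 * n) (pe (\<lambda>h. qn q (h + 2)) (qn q) 0)"
proof
  fix w
  have q1': "qint q 1 = 1" using q1 by (simp add: qint_def)
  have cat: "catalan w \<longleftrightarrow> (\<forall>i\<in>{1..length w}. 0 \<le> psum w i) \<and> psum w (length w) = 0"
  proof
    assume c: "catalan w"
    show "(\<forall>i\<in>{1..length w}. 0 \<le> psum w i) \<and> psum w (length w) = 0"
    proof (intro conjI ballI)
      fix i assume i: "i \<in> {1..length w}"
      show "0 \<le> psum w i"
      proof (cases "i = length w")
        case True then show ?thesis using c by (simp add: catalan_def)
      next
        case False then have "i \<in> {1..length w - 1}" using i by auto
        then show ?thesis using c by (simp add: catalan_def)
      qed
    qed (use c in \<open>simp add: catalan_def\<close>)
  next
    assume "(\<forall>i\<in>{1..length w}. 0 \<le> psum w i) \<and> psum w (length w) = 0"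
    then show "catalan w" unfolding catalan_def by auto
  qed
  have pr: "(\<Prod>i = 0..length w. qint q (1 + psum w i)) = (\<Prod>i\<in>{1..length w}. qint q (1 + psum w i))"
    using q1' by (simp add: prod.atLeast_Suc_atMost)
  show "Cat q n w = rl (2 * n) (pe (\<lambda>h. qn q (h + 2)) (qn q) 0) w"
    unfolding Cat_def rl_def pe_E_expl[OF q0] using cat pr by auto
qed

abbreviation gw :: "nat \<Rightarrow> letter list" where "gw a \<equiv> concat (replicate a [X, Y])"

abbreviation ug :: "nat \<Rightarrow> 'f::field" where "ug \<equiv> (\<lambda>h. if h = 0 then 1 else 0)"
abbreviation dg :: "'f::field \<Rightarrow> nat \<Rightarrow> 'f" where "dg q \<equiv> (\<lambda>h. if h = 1 then - inverse q else 0)"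

lemma pe_g_gw: "pe ug (dg q) 0 (gw a) = (- inverse q) ^ a"
  by (induction a) auto

lemma pe_g_nz: "pe ug (dg (q::'f::field)) 0 w \<noteq> 0 \<Longrightarrow> \<exists>a. w = gw a"
proof (induction w rule: induct_list012)
  case 1 then show ?case by (intro exI[of _ 0]) simp
next
  case (2 x) then show ?case by (cases x) auto
next
  case (3 x y zs)
  show ?case
  proof (cases x)
    case X
    show ?thesis
    proof (cases y)
      case X then show ?thesis using 3 \<open>x = X\<close> by simp
    next
      case Y
      then have "pe ug (dg q) 0 zs \<noteq> 0" using 3 \<open>x = X\<close> by simp
      then obtain a where "zs = gw a" using 3 by blast
      then show ?thesis using \<open>x = X\<close> Y by (intro exI[of _ "Suc a"]) simp
    qed
  next
    case Y then show ?thesis using 3 by simp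
  qed
qed

lemma len_gw: "length (gw a) = 2 * a"
  by (induction a) auto

lemma Gt_eq: "rl (2 * a) (pe ug (dg (q::'f::field)) 0) = (\<lambda>w. (- inverse q) ^ a * Gt a w)"
proof
  fix w
  show "rl (2 * a) (pe ug (dg q) 0) w = (- inverse q) ^ a * Gt a w"
  proof (cases "pe ug (dg q) 0 w = 0")
    case True
    have "w \<noteq> gw a \<or> True" by simp
    show ?thesis
    proof (cases "w = gw a")
      case True
      then show ?thesis using \<open>pe ug (dg q) 0 w = 0\<close> pe_g_gw[of q a] by (simp add: rl_def Gt_def single_word_def len_gw)
    next
      case False
      then show ?thesis using \<open>pe ug (dg q) 0 w = 0\<close> by (simp add: rl_def Gt_def single_word_def)
    qed
  next
    case False
    then obtain b where b: "w = gw b" using pe_g_nz by blast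
    show ?thesis
    proof (cases "a = b")
      case True then show ?thesis using b pe_g_gw[of q a] by (simp add: rl_def Gt_def single_word_def len_gw)
    next
      case False
      then have "gw b \<noteq> gw a" using len_gw[of a] len_gw[of b] by auto
      then show ?thesis using b False by (simp add: rl_def Gt_def single_word_def len_gw)
    qed
  qed
qed

lemma pe_scale: "pe (\<lambda>_. \<alpha>) (\<lambda>k. \<beta> * d k) h w = \<alpha> ^ cX w * \<beta> ^ cY w * (pe (\<lambda>_. 1) d h w :: 'f::field)"
proof (induction w arbitrary: h)
  case (Cons c w) then show ?case by (cases c) (simp_all add: algebra_simps)
qed simp

lemma rl_scale: "rl (2 * n) (pe (\<lambda>_. \<alpha>) (\<lambda>k. \<beta> * d k) 0) = (\<lambda>w. (\<alpha> * \<beta>) ^ n * (rl (2 * n) (pe (\<lambda>_. 1) d 0) w :: 'f::field))"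
proof
  fix w
  show "rl (2 * n) (pe (\<lambda>_. \<alpha>) (\<lambda>k. \<beta> * d k) 0) w = (\<alpha> * \<beta>) ^ n * rl (2 * n) (pe (\<lambda>_. 1) d 0) w"
  proof (cases "pe (\<lambda>_. 1) d 0 w = 0 \<or> length w \<noteq> 2 * n")
    case True then show ?thesis by (auto simp: rl_def pe_scale)
  next
    case False
    then have "cX w = cY w" "length w = 2 * n" using pe_bal[of "\<lambda>_. 1" d 0 w] by auto
    then have "cX w = n" "cY w = n" using len_cXY[of w] by auto
    then show ?thesis using False by (simp add: rl_def pe_scale power_mult_distrib)
  qed
qed

lemma rl_odd_pe: "rl (Suc (2 * a)) (pe u d 0) = (\<lambda>_. 0)"
proof
  fix w
  show "rl (Suc (2 * a)) (pe u d 0) w = 0"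
  proof (cases "pe u d 0 w = 0")
    case False
    then have "cX w = cY w" using pe_bal[of u d 0 w] by simp
    then have "length w \<noteq> Suc (2 * a)" using len_cXY[of w] by presburger
    then show ?thesis by (simp add: rl_def)
  qed (simp add: rl_def)
qed

lemma rl_odd_LL: "rl (Suc (2 * a)) (LL q) = (\<lambda>_. 0)"
proof
  fix w
  show "rl (Suc (2 * a)) (LL q) w = 0"
  proof (cases "LL q w = 0")
    case False
    then have "cX w = cY w" by (rule LL_bal)
    then have "length w \<noteq> Suc (2 * a)" using len_cXY[of w] by presburger
    then show ?thesis by (simp add: rl_def)
  qed (simp add: rl_def)
qed

lemma sum_even_odd: "(\<Sum>i\<le>2 * n. f i) = (\<Sum>a\<le>n. f (2 * a)) + (\<Sum>a<n. f (Suc (2 * a)))"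
proof (induction n)
  case (Suc n)
  have "(\<Sum>i\<le>2 * Suc n. f i) = (\<Sum>i\<le>2 * n. f i) + f (Suc (2 * n)) + f (2 * Suc n)"
    by (simp add: add.assoc)
  then show ?case using Suc by (simp add: algebra_simps)
qed simp

lemma deg_id:
  assumes "\<And>w. sh q A B w = C w" and "\<And>a. rl (Suc (2 * a)) A = (\<lambda>_. 0)"
  shows "(\<Sum>a\<le>n. sh q (rl (2 * a) A) (rl (2 * (n - a)) B) w) = rl (2 * n) C w"
proof -
  have C: "C = sh q A B" using assms(1) by auto
  have "rl (2 * n) C w = (\<Sum>i\<le>2 * n. sh q (rl i A) (rl (2 * n - i) B) w)"
    unfolding C by (rule rl_sh)
  also have "\<dots> = (\<Sum>a\<le>n. sh q (rl (2 * a) A) (rl (2 * n - 2 * a) B) w)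
       + (\<Sum>a<n. sh q (rl (Suc (2 * a)) A) (rl (2 * n - Suc (2 * a)) B) w)"
    by (rule sum_even_odd)
  also have "\<dots> = (\<Sum>a\<le>n. sh q (rl (2 * a) A) (rl (2 * (n - a)) B) w)"
    by (simp add: assms(2) sh_zero_l right_diff_distrib')
  finally show ?thesis ..
qed

definition HH :: "'f::field \<Rightarrow> nat \<Rightarrow> 'f vec" where
  "HH q n = rl (2 * n) (pe (\<lambda>_. 1) (dH q) 0)"

lemma HH0: "HH q 0 = single_word []"
  by (rule ext) (auto simp: HH_def rl_def single_word_def)


lemma Gt0: "Gt 0 = single_word []"
  by (simp add: Gt_def)

context
  fixes q :: "'f::field_char_0"
  assumes q0: "q \<noteq> 0" and qr: "\<And>n. 0 < n \<Longrightarrow> q ^ n \<noteq> 1"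
begin

lemma q1': "q - inverse q \<noteq> 0" using q1[OF q0 qr] .

lemma Cat0: "Cat q 0 = single_word []"
  using q1' by (intro ext) (auto simp: Cat_def single_word_def catalan_def psum_def qint_def)

lemma E1: "(\<Sum>a\<le>n. (inverse q ^ 4 * s2 q) ^ (n - a) * sh q (Cat q a) (HH q (n - a)) w) = s2 q ^ n * HH q n w"
proof -
  have P: "\<And>w. sh q (pe (\<lambda>h. qn q (h + 2)) (qn q) 0) (pe (\<lambda>_. inverse q ^ 4) (\<lambda>k. s2 q * dH q k) 0) w
      = (\<lambda>w. pe (\<lambda>_. 1) (\<lambda>k. s2 q * dH q k) 0 w) w"
    using P1[OF q0 q1', of 0 0] by simp
  have "(\<Sum>a\<le>n. sh q (rl (2 * a) (pe (\<lambda>h. qn q (h + 2)) (qn q) 0)) (rl (2 * (n - a)) (pe (\<lambda>_. inverse q ^ 4) (\<lambda>k. s2 q * dH q k) 0)) w)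
     = rl (2 * n) (\<lambda>w. pe (\<lambda>_. 1) (\<lambda>k. s2 q * dH q k) 0 w) w"
    by (rule deg_id[OF P rl_odd_pe])
  then show ?thesis
    unfolding Cat_eq[OF q0 q1', symmetric] rl_scale HH_def[symmetric] sh_smult_r
    by (simp add: mult_ac)
qed

lemma E2: "(\<Sum>a\<le>n. (- inverse q) ^ a * bb q ^ (n - a) * sh q (Gt a) (HH q (n - a)) w) = (inverse q ^ 2 * bb q) ^ n * HH q n w"
proof -
  have P: "\<And>w. sh q (pe ug (dg q) 0) (pe (\<lambda>_. 1) (\<lambda>k. bb q * dH q k) 0) w
      = (\<lambda>w. pe (\<lambda>_. inverse q ^ 2) (\<lambda>k. bb q * dH q k) 0 w) w"
    using P4[OF q0 q1', of 0 0] by simp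
  have "(\<Sum>a\<le>n. sh q (rl (2 * a) (pe ug (dg q) 0)) (rl (2 * (n - a)) (pe (\<lambda>_. 1) (\<lambda>k. bb q * dH q k) 0)) w)
     = rl (2 * n) (\<lambda>w. pe (\<lambda>_. inverse q ^ 2) (\<lambda>k. bb q * dH q k) 0 w) w"
    by (rule deg_id[OF P rl_odd_pe])
  then show ?thesis
    unfolding Gt_eq rl_scale HH_def[symmetric] sh_smult_r sh_smult_l
    by (simp add: mult_ac)
qed

lemma E3: "(\<Sum>a\<le>n. bb q ^ (n - a) * sh q (rl (2 * a) (LL q)) (HH q (n - a)) w) = rr q 1 * of_nat n * bb q ^ n * HH q n w"
proof -
  have P: "\<And>w. sh q (LL q) (YY q 0) w = (\<lambda>w. rr q 1 * of_nat (cY w) * YY q 0 w) w"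
    using P3[OF q0 qr, of 0] by simp
  have D: "(\<Sum>a\<le>n. sh q (rl (2 * a) (LL q)) (rl (2 * (n - a)) (YY q 0)) w)
     = rl (2 * n) (\<lambda>w. rr q 1 * of_nat (cY w) * YY q 0 w) w"
    by (rule deg_id[OF P rl_odd_LL])
  have R: "rl (2 * n) (\<lambda>w. rr q 1 * of_nat (cY w) * YY q 0 w) w = rr q 1 * of_nat n * bb q ^ n * HH q n w"
  proof (cases "length w = 2 * n \<and> YY q 0 w \<noteq> 0")
    case True
    then have "cX w = cY w" using pe_bal[of "\<lambda>_. 1" "\<lambda>k. bb q * dH q k" 0 w] by simp
    then have "cY w = n" using True len_cXY[of w] by simp
    moreover have "YY q 0 w = bb q ^ n * pe (\<lambda>_. 1) (dH q) 0 w"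
      using fun_cong[OF rl_scale[of n 1 "bb q" "dH q"], of w] True by (simp add: rl_def)
    ultimately show ?thesis using True by (simp add: rl_def HH_def)
  next
    case False
    show ?thesis
    proof (cases "length w = 2 * n")
      case False then show ?thesis by (simp add: rl_def HH_def)
    next
      case True
      then have "YY q 0 w = 0" using False by simp
      moreover have "bb q \<noteq> 0" using q1' by (simp add: bb_def)
      ultimately show ?thesis using pe_scale[of 1 "bb q" "dH q" 0 w] by (simp add: rl_def HH_def)
    qed
  qed
  show ?thesis
    using D R unfolding rl_scale HH_def[symmetric] sh_smult_r
    by (simp add: mult_ac)
qed

end

lemma fin_supp_len: "(\<And>w. f w \<noteq> 0 \<Longrightarrow> length w = m) \<Longrightarrow> finite (supp f)"
  by (rule finite_subset[OF _ finite_len_le[of m]]) (auto simp: supp_def)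

lemma qstar_supp:
  assumes f: "finite (supp f)" and g: "finite (supp g)"
  shows "finite (supp (qstar q f g))"
proof -
  let ?M = "Max (insert 0 (length ` supp f)) + Max (insert 0 (length ` supp g))"
  have "supp (qstar q f g) \<subseteq> {w. length w \<le> ?M}"
  proof
    fix w assume "w \<in> supp (qstar q f g)"
    then have "(\<Sum>u\<in>supp f. \<Sum>v\<in>supp g. f u * g v * qsh q u v w) \<noteq> 0"
      by (simp add: supp_def qstar_def)
    then obtain u where u: "u \<in> supp f" and "(\<Sum>v\<in>supp g. f u * g v * qsh q u v w) \<noteq> 0"
      by (meson sum.neutral)
    then obtain v where v: "v \<in> supp g" and "f u * g v * qsh q u v w \<noteq> 0"
      by (meson sum.neutral)
    then have "length w = length u + length v" using qsh_len by auto
    moreover have "length u \<le> Max (insert 0 (length ` supp f))" using u f by simp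
    moreover have "length v \<le> Max (insert 0 (length ` supp g))" using v g by simp
    ultimately show "w \<in> {w. length w \<le> ?M}" by simp
  qed
  then show ?thesis by (rule finite_subset) (rule finite_len_le)
qed

lemma gen_fin:
  assumes FS: "\<And>s. s \<in> S \<Longrightarrow> finite (supp s)"
  shows "a \<in> gen_subalg q S \<Longrightarrow> finite (supp a)"
proof (induction rule: gen_subalg.induct)
  case one
  show ?case by (rule fin_supp_len[of _ 0]) (auto simp: single_word_def split: if_splits)
next
  case (base s) then show ?case by (rule FS)
next
  case (add a b)
  have "supp (\<lambda>w. a w + b w) \<subseteq> supp a \<union> supp b" by (auto simp: supp_def)
  then show ?case using add.IH by (meson finite_UnI finite_subset)
next
  case (smult a c)
  have "supp (\<lambda>w. c * a w) \<subseteq> supp a" by (auto simp: supp_def)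
  then show ?case using smult.IH by (meson finite_subset)
next
  case (star a b) show ?case by (rule qstar_supp[OF star.IH])
qed

context
  fixes S :: "'f::field vec set" and q :: 'f
  assumes FS: "\<And>s. s \<in> S \<Longrightarrow> finite (supp s)"
begin

lemma mem_sh: "a \<in> gen_subalg q S \<Longrightarrow> b \<in> gen_subalg q S \<Longrightarrow> sh q a b \<in> gen_subalg q S"
proof -
  assume a: "a \<in> gen_subalg q S" and b: "b \<in> gen_subalg q S"
  have "qstar q a b \<in> gen_subalg q S" by (rule gen_subalg.star[OF a b])
  moreover have "qstar q a b = sh q a b" by (rule qstar_sh[OF gen_fin[OF FS a] gen_fin[OF FS b]])
  ultimately show ?thesis by simp
qed

lemma mem_zero: "(\<lambda>w. 0) \<in> gen_subalg q S"
  using gen_subalg.smult[OF gen_subalg.one, where c = 0] by simp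

lemma mem_sum: "finite I \<Longrightarrow> (\<And>i. i \<in> I \<Longrightarrow> f i \<in> gen_subalg q S) \<Longrightarrow> (\<lambda>w. \<Sum>i\<in>I. f i w) \<in> gen_subalg q S"
proof (induction I rule: finite_induct)
  case empty then show ?case by (simp add: mem_zero)
next
  case (insert x F)
  have "(\<lambda>w. f x w + (\<lambda>w. \<Sum>i\<in>F. f i w) w) \<in> gen_subalg q S"
    by (rule gen_subalg.add) (use insert in auto)
  then show ?case using insert by simp
qed

end

lemma gen_mono:
  assumes "\<And>s. s \<in> S \<Longrightarrow> s \<in> gen_subalg q T"
  shows "gen_subalg q S \<subseteq> gen_subalg q T"
proof
  fix a assume "a \<in> gen_subalg q S"
  then show "a \<in> gen_subalg q T"
    by (induction rule: gen_subalg.induct) (auto intro: gen_subalg.intros assms)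
qed

lemma sum_split0: "(\<Sum>a\<le>(n::nat). f a) = f 0 + (\<Sum>a\<in>{1..n}. (f a :: 'f::comm_monoid_add))"
proof -
  have "{..n} = insert 0 {1..n}" by auto
  then show ?thesis by simp
qed

lemma inv_pow_ne1: "(q::'f::field) \<noteq> 0 \<Longrightarrow> q ^ m \<noteq> 1 \<Longrightarrow> inverse q ^ m \<noteq> 1"
  by (metis inverse_1 inverse_inverse_eq power_inverse)

lemma mem_solve:
  assumes "\<And>w. K * F w = T w" "K \<noteq> 0" "T \<in> gen_subalg q S"
  shows "F \<in> gen_subalg q S"
proof -
  have "F = (\<lambda>w. inverse K * T w)"
    using assms(1,2) by (intro ext) (metis field_class.field_inverse mult.assoc mult_1)
  then show ?thesis using gen_subalg.smult[OF assms(3)] by simp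
qed

lemma mem_lin2: "A \<in> gen_subalg q S \<Longrightarrow> B \<in> gen_subalg q S \<Longrightarrow> (\<lambda>w. \<alpha> * A w + \<beta> * B w) \<in> gen_subalg q S"
  by (rule gen_subalg.add[OF gen_subalg.smult gen_subalg.smult])

abbreviation XC :: "'f::field \<Rightarrow> nat \<Rightarrow> 'f vec" where
  "XC q n \<equiv> rsnoc (lcons X (Cat q n)) Y"

lemma fin_Cat: "finite (supp (Cat q n))"
  by (rule fin_supp_len[of _ "2 * n"]) (auto simp: Cat_def split: if_splits)

lemma fin_XC: "finite (supp (XC q n))"
proof (rule fin_supp_len[of _ "2 * n + 2"])
  fix w assume nz: "XC q n w \<noteq> 0"
  then have w: "w \<noteq> []" and l: "lcons X (Cat q n) (butlast w) \<noteq> 0"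
    by (auto simp: rsnoc_def split: if_splits)
  then obtain v where v: "butlast w = X # v" and c: "Cat q n v \<noteq> 0"
    by (cases "butlast w") (auto simp: lcons_def split: if_splits)
  have "length v = 2 * n" using c by (auto simp: Cat_def split: if_splits)
  then have "length (butlast w) = 2 * n + 1" using v by simp
  then show "length w = 2 * n + 2" using w by (simp add: length_butlast)
qed

lemma fin_Gt: "finite (supp (Gt n))"
  by (rule fin_supp_len[of _ "2 * n"]) (auto simp: Gt_def single_word_def len_gw split: if_splits)

lemma fin_HH: "finite (supp (HH q n))"
  by (rule fin_supp_len[of _ "2 * n"]) (auto simp: HH_def rl_def split: if_splits)

context
  fixes q :: "'f::field_char_0"
  assumes q0: "q \<noteq> 0" and qr: "\<And>n. 0 < n \<Longrightarrow> q ^ n \<noteq> 1"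
begin

abbreviation "SC \<equiv> {Cat q n | n. n \<ge> 1}"
abbreviation "SM \<equiv> {XC q n | n. True}"
abbreviation "SG \<equiv> {Gt n | n. n \<ge> 1}"
abbreviation "SH \<equiv> {HH q n | n. n \<ge> 1}"

lemma FS_C: "s \<in> SC \<Longrightarrow> finite (supp s)" using fin_Cat by auto
lemma FS_M: "s \<in> SM \<Longrightarrow> finite (supp s)" using fin_XC by auto
lemma FS_G: "s \<in> SG \<Longrightarrow> finite (supp s)" using fin_Gt by auto
lemma FS_H: "s \<in> SH \<Longrightarrow> finite (supp s)" using fin_HH by auto

lemma base_H: "1 \<le> k \<Longrightarrow> HH q k \<in> gen_subalg q SH" by (rule gen_subalg.base) auto
lemma base_C: "1 \<le> k \<Longrightarrow> Cat q k \<in> gen_subalg q SC" by (rule gen_subalg.base) auto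
lemma base_G: "1 \<le> k \<Longrightarrow> Gt k \<in> gen_subalg q SG" by (rule gen_subalg.base) auto
lemma base_M: "XC q k \<in> gen_subalg q SM" by (rule gen_subalg.base) auto

lemma s2_nz: "s2 q \<noteq> 0" using q0 q1'[OF q0 qr] by (simp add: s2_def bb_def)
lemma bb_nz: "bb q \<noteq> 0" using q1'[OF q0 qr] by (simp add: bb_def)

lemma HH_in_C: "HH q n \<in> gen_subalg q SC"
proof (induction n rule: less_induct)
  case (less n)
  show ?case
  proof (cases "n = 0")
    case True then show ?thesis by (simp add: HH0 gen_subalg.one)
  next
    case False
    let ?c = "inverse q ^ 4 * s2 q"
    let ?T = "\<lambda>w. \<Sum>a\<in>{1..n}. ?c ^ (n - a) * sh q (Cat q a) (HH q (n - a)) w"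
    have K: "s2 q ^ n - ?c ^ n \<noteq> 0"
    proof
      assume "s2 q ^ n - ?c ^ n = 0"
      then have "s2 q ^ n * 1 = s2 q ^ n * (inverse q ^ 4) ^ n"
        by (simp add: power_mult_distrib mult.commute)
      then have "(inverse q ^ 4) ^ n = 1" using s2_nz by simp
      then have "inverse q ^ (4 * n) = 1" by (simp add: power_mult)
      then show False using inv_pow_ne1[OF q0 qr[of "4 * n"]] False by simp
    qed
    have eq: "(s2 q ^ n - ?c ^ n) * HH q n w = ?T w" for w
      using E1[OF q0 qr, of n w] unfolding sum_split0 by (simp add: Cat0[OF q0 qr] sh_one_l algebra_simps)
    show ?thesis
    proof (rule mem_solve[OF eq K])
      show "?T \<in> gen_subalg q SC"
      proof (rule mem_sum[OF FS_C])
        show "finite {1..n}" by simp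
      next
        fix a assume a: "a \<in> {1..n}"
        have "sh q (Cat q a) (HH q (n - a)) \<in> gen_subalg q SC"
          by (rule mem_sh[OF FS_C base_C less]) (use a False in auto)
        then show "(\<lambda>w. ?c ^ (n - a) * sh q (Cat q a) (HH q (n - a)) w) \<in> gen_subalg q SC"
          by (rule gen_subalg.smult)
      qed
    qed
  qed
qed

lemma Cat_in_H: "Cat q n \<in> gen_subalg q SH"
proof (induction n rule: less_induct)
  case (less n)
  show ?case
  proof (cases n)
    case 0 then show ?thesis by (simp add: Cat0[OF q0 qr] gen_subalg.one)
  next
    case (Suc m)
    let ?c = "inverse q ^ 4 * s2 q"
    let ?S = "\<lambda>w. \<Sum>a\<le>m. ?c ^ (n - a) * sh q (Cat q a) (HH q (n - a)) w"
    have eq: "1 * Cat q n w = s2 q ^ n * HH q n w + (- 1) * ?S w" for w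
      using E1[OF q0 qr, of n w] unfolding Suc sum.atMost_Suc by (simp add: HH0 sh_one_r algebra_simps)
    show ?thesis
    proof (rule mem_solve[OF eq])
      show "(\<lambda>w. s2 q ^ n * HH q n w + (- 1) * ?S w) \<in> gen_subalg q SH"
      proof (rule mem_lin2)
        show "HH q n \<in> gen_subalg q SH" using Suc by (auto intro: gen_subalg.base base_H base_C base_G base_M)
        show "?S \<in> gen_subalg q SH"
        proof (rule mem_sum[OF FS_H])
          show "finite {..m}" by simp
        next
          fix a assume a: "a \<in> {..m}"
          have "sh q (Cat q a) (HH q (n - a)) \<in> gen_subalg q SH"
            by (rule mem_sh[OF FS_H less base_H]) (use a Suc in auto)
          then show "(\<lambda>w. ?c ^ (n - a) * sh q (Cat q a) (HH q (n - a)) w) \<in> gen_subalg q SH"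
            by (rule gen_subalg.smult)
        qed
      qed
    qed simp
  qed
qed

lemma HH_in_G: "HH q n \<in> gen_subalg q SG"
proof (induction n rule: less_induct)
  case (less n)
  show ?case
  proof (cases "n = 0")
    case True then show ?thesis by (simp add: HH0 gen_subalg.one)
  next
    case False
    let ?T = "\<lambda>w. \<Sum>a\<in>{1..n}. (- inverse q) ^ a * bb q ^ (n - a) * sh q (Gt a) (HH q (n - a)) w"
    have K: "(inverse q ^ 2 * bb q) ^ n - bb q ^ n \<noteq> 0"
    proof
      assume "(inverse q ^ 2 * bb q) ^ n - bb q ^ n = 0"
      then have "bb q ^ n * (inverse q ^ 2) ^ n = bb q ^ n * 1"
        by (simp add: power_mult_distrib mult.commute)
      then have "(inverse q ^ 2) ^ n = 1" using bb_nz by simp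
      then have "inverse q ^ (2 * n) = 1" by (simp add: power_mult)
      then show False using inv_pow_ne1[OF q0 qr[of "2 * n"]] False by simp
    qed
    have eq: "((inverse q ^ 2 * bb q) ^ n - bb q ^ n) * HH q n w = ?T w" for w
      using E2[OF q0 qr, of n w] unfolding sum_split0 by (simp add: Gt0 sh_one_l algebra_simps)
    show ?thesis
    proof (rule mem_solve[OF eq K])
      show "?T \<in> gen_subalg q SG"
      proof (rule mem_sum[OF FS_G])
        show "finite {1..n}" by simp
      next
        fix a assume a: "a \<in> {1..n}"
        have "sh q (Gt a) (HH q (n - a)) \<in> gen_subalg q SG"
          by (rule mem_sh[OF FS_G base_G less]) (use a False in auto)
        then show "(\<lambda>w. (- inverse q) ^ a * bb q ^ (n - a) * sh q (Gt a) (HH q (n - a)) w) \<in> gen_subalg q SG"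
          by (rule gen_subalg.smult)
      qed
    qed
  qed
qed

lemma Gt_in_H: "Gt n \<in> gen_subalg q SH"
proof (induction n rule: less_induct)
  case (less n)
  show ?case
  proof (cases n)
    case 0 then show ?thesis by (simp add: Gt0 gen_subalg.one)
  next
    case (Suc m)
    let ?S = "\<lambda>w. \<Sum>a\<le>m. (- inverse q) ^ a * bb q ^ (n - a) * sh q (Gt a) (HH q (n - a)) w"
    have eq: "(- inverse q) ^ n * Gt n w = (inverse q ^ 2 * bb q) ^ n * HH q n w + (- 1) * ?S w" for w
      using E2[OF q0 qr, of n w] unfolding Suc sum.atMost_Suc by (simp add: HH0 sh_one_r algebra_simps)
    have K: "(- inverse q) ^ n \<noteq> (0::'f)" using q0 by simp
    show ?thesis
    proof (rule mem_solve[OF eq K])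
      show "(\<lambda>w. (inverse q ^ 2 * bb q) ^ n * HH q n w + (- 1) * ?S w) \<in> gen_subalg q SH"
      proof (rule mem_lin2)
        show "HH q n \<in> gen_subalg q SH" using Suc by (auto intro: gen_subalg.base base_H base_C base_G base_M)
        show "?S \<in> gen_subalg q SH"
        proof (rule mem_sum[OF FS_H])
          show "finite {..m}" by simp
        next
          fix a assume a: "a \<in> {..m}"
          have "sh q (Gt a) (HH q (n - a)) \<in> gen_subalg q SH"
            by (rule mem_sh[OF FS_H less base_H]) (use a Suc in auto)
          then show "(\<lambda>w. (- inverse q) ^ a * bb q ^ (n - a) * sh q (Gt a) (HH q (n - a)) w) \<in> gen_subalg q SH"
            by (rule gen_subalg.smult)
        qed
      qed
    qed
  qed
qed

lemma rl_LL_XC: "rl (2 * Suc m) (LL q) = XC q m"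
  by (subst rl_LL) (simp add: Cat_eq[OF q0 q1'[OF q0 qr]])

lemma rl_LL_0: "rl (2 * 0) (LL q) = (\<lambda>_. 0)"
  using rl0_LL[of q] by simp


lemma HH_in_M: "HH q n \<in> gen_subalg q SM"
proof (induction n rule: less_induct)
  case (less n)
  show ?case
  proof (cases "n = 0")
    case True then show ?thesis by (simp add: HH0 gen_subalg.one)
  next
    case False
    let ?T = "\<lambda>w. \<Sum>a\<in>{1..n}. bb q ^ (n - a) * sh q (rl (2 * a) (LL q)) (HH q (n - a)) w"
    have K: "rr q 1 * of_nat n * bb q ^ n \<noteq> 0"
      using q1'[OF q0 qr] bb_nz False by simp
    have eq: "(rr q 1 * of_nat n * bb q ^ n) * HH q n w = ?T w" for w
      using E3[OF q0 qr, of n w] unfolding sum_split0 rl_LL_0 sh_zero_l by simp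
    show ?thesis
    proof (rule mem_solve[OF eq K])
      show "?T \<in> gen_subalg q SM"
      proof (rule mem_sum[OF FS_M])
        show "finite {1..n}" by simp
      next
        fix a assume a: "a \<in> {1..n}"
        then obtain a' where a': "a = Suc a'" by (cases a) auto
        have "sh q (rl (2 * a) (LL q)) (HH q (n - a)) \<in> gen_subalg q SM"
          unfolding a' rl_LL_XC by (rule mem_sh[OF FS_M base_M less]) (use a a' in auto)
        then show "(\<lambda>w. bb q ^ (n - a) * sh q (rl (2 * a) (LL q)) (HH q (n - a)) w) \<in> gen_subalg q SM"
          by (rule gen_subalg.smult)
      qed
    qed
  qed
qed

lemma XC_in_H: "XC q m \<in> gen_subalg q SH"
proof (induction m rule: less_induct)
  case (less m)
  let ?n = "Suc m"
  let ?S = "\<lambda>w. \<Sum>a\<le>m. bb q ^ (?n - a) * sh q (rl (2 * a) (LL q)) (HH q (?n - a)) w"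
  have eq: "1 * XC q m w = (rr q 1 * of_nat ?n * bb q ^ ?n) * HH q ?n w + (- 1) * ?S w" for w
    using E3[OF q0 qr, of ?n w] unfolding sum.atMost_Suc rl_LL_XC by (simp add: HH0 sh_one_r algebra_simps)
  show ?case
  proof (rule mem_solve[OF eq])
    show "(\<lambda>w. (rr q 1 * of_nat ?n * bb q ^ ?n) * HH q ?n w + (- 1) * ?S w) \<in> gen_subalg q SH"
    proof (rule mem_lin2)
      show "HH q ?n \<in> gen_subalg q SH" by (auto intro: gen_subalg.base base_H base_C base_G base_M)
      show "?S \<in> gen_subalg q SH"
      proof (rule mem_sum[OF FS_H])
        show "finite {..m}" by simp
      next
        fix a assume a: "a \<in> {..m}"
        have r: "rl (2 * a) (LL q) \<in> gen_subalg q SH"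
        proof (cases a)
          case 0
          have "(\<lambda>w. 0 * single_word [] w) \<in> gen_subalg q SH" by (rule gen_subalg.smult[OF gen_subalg.one])
          then show ?thesis using 0 rl_LL_0 by simp
        next
          case (Suc a')
          have "XC q a' \<in> gen_subalg q SH" using less a Suc by simp
          then show ?thesis unfolding Suc rl_LL_XC .
        qed
        have "sh q (rl (2 * a) (LL q)) (HH q (?n - a)) \<in> gen_subalg q SH"
          by (rule mem_sh[OF FS_H r base_H]) (use a in auto)
        then show "(\<lambda>w. bb q ^ (?n - a) * sh q (rl (2 * a) (LL q)) (HH q (?n - a)) w) \<in> gen_subalg q SH"
          by (rule gen_subalg.smult)
      qed
    qed
  qed simp
qed

end

theorem corollary9p13:
  fixes q :: "'f::field_char_0"
  assumes "q \<noteq> 0" and "\<forall>n::nat. n > 0 \<longrightarrow> q ^ n \<noteq> 1"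
  shows "gen_subalg q {Cat q n | n. n \<ge> 1} = gen_subalg q {rsnoc (lcons X (Cat q n)) Y | n. True}
       \<and> gen_subalg q {Cat q n | n. n \<ge> 1} = gen_subalg q {Gt n | n. n \<ge> 1}"
proof -
  have qr: "\<And>n. 0 < n \<Longrightarrow> q ^ n \<noteq> 1" using assms(2) by auto
  note q0 = assms(1)
  have CH: "gen_subalg q {Cat q n | n. n \<ge> 1} = gen_subalg q {HH q n | n. n \<ge> 1}"
  proof
    show "gen_subalg q {Cat q n | n. n \<ge> 1} \<subseteq> gen_subalg q {HH q n | n. n \<ge> 1}"
      by (rule gen_mono) (blast intro: Cat_in_H[OF q0 qr])
    show "gen_subalg q {HH q n | n. n \<ge> 1} \<subseteq> gen_subalg q {Cat q n | n. n \<ge> 1}"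
      by (rule gen_mono) (blast intro: HH_in_C[OF q0 qr])
  qed
  have MH: "gen_subalg q {rsnoc (lcons X (Cat q n)) Y | n. True} = gen_subalg q {HH q n | n. n \<ge> 1}"
  proof
    show "gen_subalg q {rsnoc (lcons X (Cat q n)) Y | n. True} \<subseteq> gen_subalg q {HH q n | n. n \<ge> 1}"
      by (rule gen_mono) (blast intro: XC_in_H[OF q0 qr])
    show "gen_subalg q {HH q n | n. n \<ge> 1} \<subseteq> gen_subalg q {rsnoc (lcons X (Cat q n)) Y | n. True}"
      by (rule gen_mono) (blast intro: HH_in_M[OF q0 qr])
  qed
  have GH: "gen_subalg q {Gt n | n. n \<ge> 1} = gen_subalg q {HH q n | n. n \<ge> 1}"
  proof
    show "gen_subalg q {Gt n | n. n \<ge> 1} \<subseteq> gen_subalg q {HH q n | n. n \<ge> 1}"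
      by (rule gen_mono) (blast intro: Gt_in_H[OF q0 qr])
    show "gen_subalg q {HH q n | n. n \<ge> 1} \<subseteq> gen_subalg q {Gt n | n. n \<ge> 1}"
      by (rule gen_mono) (blast intro: HH_in_G[OF q0 qr])
  qed
  show ?thesis using CH MH GH by simp
qed

end
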